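(* Suppose $(f_0,\dots,f_4)$ is a rational solution of $A_4(\alpha_0,\dots,\alpha_4)$ and some of $f_0,\dots,f_4$ have a pole at $t=\infty$. Then one of the following holds (indices modulo 5): (1) for some $i$, $f_i$ has a pole of first order at $t=\infty$; (2) for some $i$, $f_i,f_{i+1},f_{i+3}$ have a pole of first order at $t=\infty$; (3) for some $i$, $f_i,f_{i+1},f_{i+2}$ have a pole of first order at $t=\infty$; (4) all of $f_0,\dots,f_4$ have a pole of first order at $t=\infty$.
   Context: The $A_4^{(1)}$ Painlevé equation $A_4(\alpha_0,\dots,\alpha_4)$ with complex parameters $\alpha_j$ is the system for five functions $f_0,\dots,f_4$ of $t$ (indices in $\mathbb{Z}/5\mathbb{Z}$, ${}'=d/dt$): $f_j'=f_j(f_{j+1}-f_{j+2}+f_{j+3}-f_{j+4})+\alpha_j$ ($j=0,\dots,4$), $f_0+\dots+f_4=t$; hence $\sum_j\alpha_j=1$. A rational solution is a tuple of rational functions of $t$ satisfying it. *)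

theory Defs
  imports "HOL-Analysis.Analysis" "HOL-Computational_Algebra.Polynomial"
begin

definition rat_fun_rep :: "(complex \<Rightarrow> complex) \<Rightarrow> complex poly \<Rightarrow> complex poly \<Rightarrow> bool" where
  "rat_fun_rep f p q \<longleftrightarrow> q \<noteq> 0 \<and> (\<forall>t. poly q t \<noteq> 0 \<longrightarrow> f t = poly p t / poly q t)"

definition pole_order_inf :: "complex poly \<Rightarrow> complex poly \<Rightarrow> int" where
  "pole_order_inf p q = int (degree p) - int (degree q)"

definition A4_rational_solution ::
  "(nat \<Rightarrow> complex \<Rightarrow> complex) \<Rightarrow> (nat \<Rightarrow> complex poly) \<Rightarrow> (nat \<Rightarrow> complex poly) \<Rightarrow> (nat \<Rightarrow> complex) \<Rightarrow> bool" where
  "A4_rational_solution f p q \<alpha> \<longleftrightarrow>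
     (\<forall>j<5. rat_fun_rep (f j) (p j) (q j)) \<and>
     (\<forall>t. (\<forall>k<5. poly (q k) t \<noteq> 0) \<longrightarrow>
        (\<forall>j<5. (f j has_field_derivative
            (f j t * (f ((j+1) mod 5) t - f ((j+2) mod 5) t + f ((j+3) mod 5) t - f ((j+4) mod 5) t)
             + \<alpha> j)) (at t))
        \<and> (\<Sum>j<5. f j t) = t)"

end

theory Submission imports Defs begin

lemma poly_over_pow:
  fixes a :: "complex poly"
  assumes "degree a \<le> m"
  shows "(\<lambda>n. poly a (of_nat n) / of_nat n ^ m) \<longlonglongrightarrow> coeff a m"
proof -
  define h where "h = (\<lambda>n i. coeff a i * (if i = m then 1 else inverse (of_nat n :: complex) ^ (m - i)))"
  have eq: "\<forall>\<^sub>F n in sequentially. (\<Sum>i\<le>m. h n i) = poly a (of_nat n) / of_nat n ^ m"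
  proof (rule eventually_sequentiallyI[of 1])
    fix n :: nat assume "1 \<le> n"
    hence nz: "(of_nat n :: complex) \<noteq> 0" by simp
    have "poly a (of_nat n) = (\<Sum>i\<le>m. coeff a i * of_nat n ^ i)"
      unfolding poly_altdef
      by (rule sum.mono_neutral_left) (use assms in \<open>auto simp: coeff_eq_0\<close>)
    also have "\<dots> / of_nat n ^ m = (\<Sum>i\<le>m. coeff a i * of_nat n ^ i / of_nat n ^ m)"
      by (simp add: sum_divide_distrib)
    also have "\<dots> = (\<Sum>i\<le>m. h n i)"
    proof (rule sum.cong)
      fix i assume "i \<in> {..m}"
      hence "of_nat n ^ m = (of_nat n::complex) ^ i * of_nat n ^ (m - i)"
        by (simp add: power_add[symmetric])
      thus "coeff a i * of_nat n ^ i / of_nat n ^ m = h n i"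
        using nz by (auto simp: h_def field_simps power_inverse)
    qed simp
    finally show "(\<Sum>i\<le>m. h n i) = poly a (of_nat n) / of_nat n ^ m" by simp
  qed
  have "(\<lambda>n. \<Sum>i\<le>m. h n i) \<longlonglongrightarrow> (\<Sum>i\<le>m. coeff a i * (if i = m then 1 else 0))"
  proof (rule tendsto_sum)
    fix i assume "i \<in> {..m}"
    show "(\<lambda>n. h n i) \<longlonglongrightarrow> coeff a i * (if i = m then 1 else 0)"
    proof (cases "i = m")
      case False
      have "(\<lambda>n. inverse (of_nat n :: complex) ^ (m - i)) \<longlonglongrightarrow> 0 ^ (m - i)"
        by (intro tendsto_power lim_inverse_n)
      moreover have "(0::complex) ^ (m - i) = 0" using False \<open>i \<in> {..m}\<close> by simp
      ultimately have "(\<lambda>n. inverse (of_nat n :: complex) ^ (m - i)) \<longlonglongrightarrow> 0" by simp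
      hence "(\<lambda>n. coeff a i * inverse (of_nat n :: complex) ^ (m - i)) \<longlonglongrightarrow> coeff a i * 0"
        by (intro tendsto_mult tendsto_const)
      thus ?thesis using False by (simp add: h_def)
    qed (simp add: h_def)
  qed
  also have "(\<Sum>i\<le>m. coeff a i * (if i = m then 1 else 0)) = coeff a m"
    by (simp add: if_distrib cong: if_cong)
  finally show ?thesis using eq by (rule Lim_transform_eventually)
qed

lemma poly_ratio_lim:
  fixes a b :: "complex poly"
  assumes "b \<noteq> 0" "degree a \<le> degree b + k"
  shows "(\<lambda>n. poly a (of_nat n) / (poly b (of_nat n) * of_nat n ^ k)) \<longlonglongrightarrow> coeff a (degree b + k) / lead_coeff b"
proof -
  have 1: "(\<lambda>n. (poly a (of_nat n) / of_nat n ^ (degree b + k)) / (poly b (of_nat n) / of_nat n ^ degree b))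
     \<longlonglongrightarrow> coeff a (degree b + k) / lead_coeff b"
    using assms by (intro tendsto_divide poly_over_pow) auto
  have "\<forall>\<^sub>F n in sequentially. (poly a (of_nat n) / of_nat n ^ (degree b + k)) / (poly b (of_nat n) / of_nat n ^ degree b)
     = poly a (of_nat n) / (poly b (of_nat n) * of_nat n ^ k)"
    by (rule eventually_sequentiallyI[of 1]) (auto simp: power_add field_simps)
  from Lim_transform_eventually[OF 1 this] show ?thesis .
qed


lemma alg0:
  fixes a b c d e :: complex
  assumes "a*(b-c+d-e)=0" "b*(c-d+e-a)=0" "c*(d-e+a-b)=0" "d*(e-a+b-c)=0" "e*(a-b+c-d)=0"
    "a+b+c+d+e = 0"
  shows "a=0 \<and> b=0 \<and> c=0 \<and> d=0 \<and> e=0"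
  using assms
  apply (cases "a=0"; cases "b=0"; cases "c=0"; cases "d=0"; cases "e=0")
  apply simp_all
  apply (auto simp: complex_eq_iff)
  done

lemma ex_less5: "(\<exists>i<(5::nat). Q i) \<longleftrightarrow> Q 0 \<or> Q 1 \<or> Q 2 \<or> Q 3 \<or> Q 4"
  by (auto simp: less_Suc_eq numeral_eq_Suc)
lemma eqP: "B \<subseteq> {..<5} \<Longrightarrow> ({j. j<(5::nat) \<and> R j} = B) = (\<forall>j\<in>{0,1,2,3,4}. R j \<longleftrightarrow> j \<in> B)"
  by (auto simp: less_Suc_eq numeral_eq_Suc)
lemma five: "{0..<5::nat} = {0,1,2,3,4}" by (auto simp: less_Suc_eq numeral_eq_Suc)
lemma alg1:
  fixes c :: "nat \<Rightarrow> complex"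
  assumes "c 0*(c 1-c 2+c 3-c 4)=0" "c 1*(c 2-c 3+c 4-c 0)=0" "c 2*(c 3-c 4+c 0-c 1)=0"
    "c 3*(c 4-c 0+c 1-c 2)=0" "c 4*(c 0-c 1+c 2-c 3)=0"
    "c 0+c 1+c 2+c 3+c 4 = 1"
  shows "(\<exists>i<5. {j. j<5 \<and> c j \<noteq> 0} = {i}
                  \<or> {j. j<5 \<and> c j \<noteq> 0} = {i, (i+1) mod 5, (i+3) mod 5}
                  \<or> {j. j<5 \<and> c j \<noteq> 0} = {i, (i+1) mod 5, (i+2) mod 5})
            \<or> {j. j<5 \<and> c j \<noteq> 0} = {0..<5}"
  using assms
  apply (simp only: ex_less5)
  apply (simp add: eqP five)
  apply (cases "c 0=0"; cases "c 1=0"; cases "c 2=0"; cases "c 3=0"; cases "c 4=0")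
  apply (simp_all)
  apply (auto simp: complex_eq_iff)
  done

theorem proposition1p1:
  fixes f :: "nat \<Rightarrow> complex \<Rightarrow> complex" and p q :: "nat \<Rightarrow> complex poly"
    and \<alpha> :: "nat \<Rightarrow> complex"
  assumes sol: "A4_rational_solution f p q \<alpha>"
    and pole: "\<exists>j<5. pole_order_inf (p j) (q j) > 0"
  shows "let P = {j. j < 5 \<and> pole_order_inf (p j) (q j) > 0} in
           (\<forall>j\<in>P. pole_order_inf (p j) (q j) = 1) \<and>
           ((\<exists>i<5. P = {i}
                  \<or> P = {i, (i+1) mod 5, (i+3) mod 5}
                  \<or> P = {i, (i+1) mod 5, (i+2) mod 5})
            \<or> P = {0..<5})"
proof -
  have rep: "\<And>j. j < 5 \<Longrightarrow> rat_fun_rep (f j) (p j) (q j)"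
    and eqs: "\<And>t. (\<forall>k<5. poly (q k) t \<noteq> 0) \<Longrightarrow>
        (\<forall>j<5. (f j has_field_derivative
            (f j t * (f ((j+1) mod 5) t - f ((j+2) mod 5) t + f ((j+3) mod 5) t - f ((j+4) mod 5) t)
             + \<alpha> j)) (at t))
        \<and> (\<Sum>j<5. f j t) = t"
    using sol unfolding A4_rational_solution_def by auto
  have qnz: "\<And>j. j < 5 \<Longrightarrow> q j \<noteq> 0" using rep unfolding rat_fun_rep_def by auto
  have fval: "\<And>j t. j < 5 \<Longrightarrow> poly (q j) t \<noteq> 0 \<Longrightarrow> f j t = poly (p j) t / poly (q j) t"
    using rep unfolding rat_fun_rep_def by auto
  define po where "po j = pole_order_inf (p j) (q j)" for j
  define M where "M = Max (po ` {..<5})"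
  have Mge: "\<And>j. j < 5 \<Longrightarrow> po j \<le> M" unfolding M_def by (intro Max_ge) auto
  obtain j0 where j0: "j0 < 5" "po j0 = M"
  proof -
    have "Max (po ` {..<5}) \<in> po ` {..<5}" by (intro Max_in) (auto simp: lessThan_empty_iff)
    thus ?thesis using that unfolding M_def by auto
  qed
  have Mpos: "M > 0" using pole Mge unfolding po_def by fastforce
  define N where "N = nat M"
  have N1: "N \<ge> 1" and NM: "int N = M" using Mpos unfolding N_def by auto
  have degle: "\<And>j. j < 5 \<Longrightarrow> degree (p j) \<le> degree (q j) + N"
    using Mge NM unfolding po_def pole_order_inf_def by fastforce
  define c where "c j = coeff (p j) (degree (q j) + N) / lead_coeff (q j)" for j
  have c_iff: "c j \<noteq> 0 \<longleftrightarrow> po j = M" if "j < 5" for j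
  proof
    assume "c j \<noteq> 0"
    hence "coeff (p j) (degree (q j) + N) \<noteq> 0" unfolding c_def by auto
    hence "degree (q j) + N \<le> degree (p j)" by (rule le_degree)
    thus "po j = M" using degle[OF that] NM unfolding po_def pole_order_inf_def by linarith
  next
    assume "po j = M"
    hence dq: "degree (p j) = degree (q j) + N" using NM unfolding po_def pole_order_inf_def by linarith
    hence "p j \<noteq> 0" using N1 by auto
    thus "c j \<noteq> 0" using dq qnz[OF that] unfolding c_def by (metis divide_eq_0_iff leading_coeff_0_iff)
  qed
  have ev_q: "\<forall>\<^sub>F m in sequentially. \<forall>k\<in>{..<5}. poly (q k) (of_nat m) \<noteq> 0"
  proof (rule eventually_ball_finite)
    show "\<forall>k\<in>{..<5}. \<forall>\<^sub>F m in sequentially. poly (q k) (of_nat m) \<noteq> 0"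
    proof
      fix k assume k: "k \<in> {..<(5::nat)}"
      have "(\<lambda>m. poly (q k) (of_nat m) / of_nat m ^ degree (q k)) \<longlonglongrightarrow> lead_coeff (q k)"
        by (rule poly_over_pow) simp
      moreover have "lead_coeff (q k) \<noteq> 0" using qnz k by auto
      ultimately have "\<forall>\<^sub>F m in sequentially. poly (q k) (of_nat m) / of_nat m ^ degree (q k) \<noteq> 0"
        by (rule tendsto_imp_eventually_ne)
      thus "\<forall>\<^sub>F m in sequentially. poly (q k) (of_nat m) \<noteq> 0"
        by (rule eventually_mono) auto
    qed
  qed simp
  have ev_x: "\<forall>\<^sub>F m in sequentially. (of_nat m :: complex) \<noteq> 0"
    by (rule eventually_sequentiallyI[of 1]) auto
  have limf: "(\<lambda>m. f j (of_nat m) / of_nat m ^ N) \<longlonglongrightarrow> c j" if j: "j < 5" for j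
  proof -
    have 1: "(\<lambda>m. poly (p j) (of_nat m) / (poly (q j) (of_nat m) * of_nat m ^ N)) \<longlonglongrightarrow> c j"
      unfolding c_def using qnz[OF j] degle[OF j] by (rule poly_ratio_lim)
    have "\<forall>\<^sub>F m in sequentially. poly (p j) (of_nat m) / (poly (q j) (of_nat m) * of_nat m ^ N)
          = f j (of_nat m) / of_nat m ^ N"
      using ev_q by (rule eventually_mono) (use j in \<open>auto simp: fval\<close>)
    from Lim_transform_eventually[OF 1 this] show ?thesis .
  qed
  have key: "c j * (c ((j+1) mod 5) - c ((j+2) mod 5) + c ((j+3) mod 5) - c ((j+4) mod 5)) = 0"
    if j: "j < 5" for j
  proof -
    define A where "A = pderiv (p j) * q j - p j * pderiv (q j)"
    define G where "G t = f ((j+1) mod 5) t - f ((j+2) mod 5) t + f ((j+3) mod 5) t - f ((j+4) mod 5) t" for t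
    have dq2: "degree (q j ^ 2) = 2 * degree (q j)" using qnz[OF j] by (simp add: degree_power_eq)
    have "degree (pderiv (p j) * q j) \<le> degree (p j) + degree (q j)"
      using degree_mult_le[of "pderiv (p j)" "q j"] degree_pderiv[of "p j"] by linarith
    moreover have "degree (p j * pderiv (q j)) \<le> degree (p j) + degree (q j)"
      using degree_mult_le[of "p j" "pderiv (q j)"] degree_pderiv[of "q j"] by linarith
    ultimately have "degree A \<le> degree (p j) + degree (q j)"
      unfolding A_def using degree_diff_le_max[of "pderiv (p j) * q j" "p j * pderiv (q j)"] by linarith
    hence dA: "degree A < degree (q j ^ 2) + 2 * N" using degle[OF j] N1 dq2 by linarith
    have limA: "(\<lambda>m. poly A (of_nat m) / (poly (q j ^ 2) (of_nat m) * of_nat m ^ (2 * N))) \<longlonglongrightarrow> 0"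
      using poly_ratio_lim[of "q j ^ 2" A "2 * N"] qnz[OF j] dA by (simp add: coeff_eq_0)
    have lima: "(\<lambda>m. \<alpha> j * inverse (of_nat m :: complex) ^ (2 * N)) \<longlonglongrightarrow> \<alpha> j * 0 ^ (2 * N)"
      by (intro tendsto_mult tendsto_const tendsto_power lim_inverse_n)
    have lim2: "(\<lambda>m. poly A (of_nat m) / (poly (q j ^ 2) (of_nat m) * of_nat m ^ (2 * N))
                 - \<alpha> j * inverse (of_nat m :: complex) ^ (2 * N)) \<longlonglongrightarrow> 0 - 0"
    proof -
      have z: "(0::complex) ^ (2 * N) = 0" using N1 by simp
      show ?thesis using tendsto_diff[OF limA lima] unfolding z by simp
    qed
    have jk: "(j+1) mod 5 < 5" "(j+2) mod 5 < 5" "(j+3) mod 5 < 5" "(j+4) mod 5 < 5" by auto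
    have lim1: "(\<lambda>m. (f j (of_nat m) / of_nat m ^ N) * (f ((j+1) mod 5) (of_nat m) / of_nat m ^ N
          - f ((j+2) mod 5) (of_nat m) / of_nat m ^ N + f ((j+3) mod 5) (of_nat m) / of_nat m ^ N
          - f ((j+4) mod 5) (of_nat m) / of_nat m ^ N))
       \<longlonglongrightarrow> c j * (c ((j+1) mod 5) - c ((j+2) mod 5) + c ((j+3) mod 5) - c ((j+4) mod 5))"
      by (intro tendsto_mult tendsto_diff tendsto_add limf j jk)
    have "\<forall>\<^sub>F m in sequentially. (f j (of_nat m) / of_nat m ^ N) * (f ((j+1) mod 5) (of_nat m) / of_nat m ^ N
          - f ((j+2) mod 5) (of_nat m) / of_nat m ^ N + f ((j+3) mod 5) (of_nat m) / of_nat m ^ N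
          - f ((j+4) mod 5) (of_nat m) / of_nat m ^ N) =
          poly A (of_nat m) / (poly (q j ^ 2) (of_nat m) * of_nat m ^ (2 * N))
                 - \<alpha> j * inverse (of_nat m :: complex) ^ (2 * N)"
      using ev_q ev_x
    proof eventually_elim
      case (elim m)
      define t where "t = (of_nat m :: complex)"
      have qall: "\<forall>k<5. poly (q k) t \<noteq> 0" using elim unfolding t_def by auto
      have qt: "poly (q j) t \<noteq> 0" using qall j by auto
      have D1: "(f j has_field_derivative f j t * G t + \<alpha> j) (at t)"
        using eqs[OF qall] j unfolding G_def by auto
      have D2: "((\<lambda>x. poly (p j) x / poly (q j) x) has_field_derivative
          (poly (pderiv (p j)) t * poly (q j) t - poly (p j) t * poly (pderiv (q j)) t) / (poly (q j) t * poly (q j) t)) (at t)"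
        by (intro DERIV_divide poly_DERIV qt)
      have op: "open {x. poly (q j) x \<noteq> poly 0 x}"
        by (intro open_Collect_neq continuous_on_poly continuous_on_id)
      have D3: "(f j has_field_derivative
          (poly (pderiv (p j)) t * poly (q j) t - poly (p j) t * poly (pderiv (q j)) t) / (poly (q j) t * poly (q j) t)) (at t)"
        by (rule has_field_derivative_transform_within_open[OF D2 op]) (use qt j in \<open>auto simp: fval\<close>)
      have E: "f j t * G t + \<alpha> j = poly A t / poly (q j ^ 2) t"
        using DERIV_unique[OF D1 D3] unfolding A_def by (simp add: power2_eq_square)
      have tnz: "t \<noteq> 0" using elim unfolding t_def by auto
      have "(f j t / t ^ N) * (f ((j+1) mod 5) t / t ^ N - f ((j+2) mod 5) t / t ^ N
          + f ((j+3) mod 5) t / t ^ N - f ((j+4) mod 5) t / t ^ N) = (f j t * G t) / t ^ (2 * N)"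
      proof -
        have tt: "t ^ (2 * N) = t ^ N * t ^ N" by (simp add: mult_2 power_add)
        show ?thesis unfolding G_def tt using tnz by (simp add: field_simps)
      qed
      also have "\<dots> = (poly A t / poly (q j ^ 2) t - \<alpha> j) / t ^ (2 * N)"
        using E by (simp add: algebra_simps)
      also have "\<dots> = poly A t / (poly (q j ^ 2) t * t ^ (2 * N)) - \<alpha> j * inverse t ^ (2 * N)"
        using tnz qt by (simp add: field_simps power_inverse)
      finally show ?case unfolding t_def .
    qed
    from LIMSEQ_unique[OF Lim_transform_eventually[OF lim1 this] lim2] show ?thesis by simp
  qed
  have sumc: "(\<Sum>j<5. c j) = (if N = 1 then 1 else 0)"
  proof -
    have l1: "(\<lambda>m. \<Sum>j<5. f j (of_nat m) / of_nat m ^ N) \<longlonglongrightarrow> (\<Sum>j<5. c j)"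
      by (intro tendsto_sum limf) auto
    have l2: "(\<lambda>m. inverse (of_nat m :: complex) ^ (N - 1)) \<longlonglongrightarrow> (if N = 1 then 1 else 0)"
    proof (cases "N = 1")
      case False
      have L: "(\<lambda>m. inverse (of_nat m :: complex) ^ (N - 1)) \<longlonglongrightarrow> 0 ^ (N - 1)"
        by (intro tendsto_power lim_inverse_n)
      have z: "(0::complex) ^ (N - 1) = 0" using False N1 by simp
      show ?thesis using L False unfolding z by simp
    qed simp
    have "\<forall>\<^sub>F m in sequentially. (\<Sum>j<5. f j (of_nat m) / of_nat m ^ N) = inverse (of_nat m :: complex) ^ (N - 1)"
      using ev_q ev_x
    proof eventually_elim
      case (elim m)
      define t where "t = (of_nat m :: complex)"
      have qall: "\<forall>k<5. poly (q k) t \<noteq> 0" using elim unfolding t_def by auto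
      have tnz: "t \<noteq> 0" using elim unfolding t_def by auto
      have "(\<Sum>j<5. f j t / t ^ N) = (\<Sum>j<5. f j t) / t ^ N" by (simp add: sum_divide_distrib)
      also have "\<dots> = t / t ^ N" using eqs[OF qall] by simp
      also have "t / t ^ N = inverse t ^ (N - 1)"
      proof -
        have tN: "t ^ N = t * t ^ (N - 1)" using N1 by (metis Suc_diff_le diff_Suc_1 power_Suc)
        show ?thesis unfolding tN using tnz by (simp add: field_simps power_inverse)
      qed
      finally show ?case unfolding t_def .
    qed
    from LIMSEQ_unique[OF Lim_transform_eventually[OF l1 this] l2] show ?thesis .
  qed
  have k0: "c 0 * (c 1 - c 2 + c 3 - c 4) = 0" using key[of 0] by (simp add: numeral_2_eq_2)
  have k1: "c 1 * (c 2 - c 3 + c 4 - c 0) = 0" using key[of 1] by (simp add: numeral_2_eq_2)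
  have k2: "c 2 * (c 3 - c 4 + c 0 - c 1) = 0" using key[of 2] by (simp add: numeral_2_eq_2)
  have k3: "c 3 * (c 4 - c 0 + c 1 - c 2) = 0" using key[of 3] by (simp add: numeral_2_eq_2)
  have k4: "c 4 * (c 0 - c 1 + c 2 - c 3) = 0" using key[of 4] by (simp add: numeral_2_eq_2)
  have s5: "(\<Sum>j<5. c j) = c 0 + c 1 + c 2 + c 3 + c 4" by (simp add: numeral_eq_Suc add.commute add.left_commute)
  have cj0: "c j0 \<noteq> 0" using c_iff[OF j0(1)] j0(2) by simp
  have N1': "N = 1"
  proof (rule ccontr)
    assume "N \<noteq> 1"
    hence "c 0 + c 1 + c 2 + c 3 + c 4 = 0" using sumc s5 by simp
    hence "c 0 = 0 \<and> c 1 = 0 \<and> c 2 = 0 \<and> c 3 = 0 \<and> c 4 = 0" using alg0 k0 k1 k2 k3 k4 by blast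
    thus False using cj0 j0(1) by (auto simp: less_Suc_eq numeral_eq_Suc)
  qed
  have M1: "M = 1" using NM N1' by simp
  have Peq: "{j. j < 5 \<and> pole_order_inf (p j) (q j) > 0} = {j. j < 5 \<and> c j \<noteq> 0}"
    using c_iff Mge M1 unfolding po_def by force
  have P1: "\<forall>j\<in>{j. j < 5 \<and> pole_order_inf (p j) (q j) > 0}. pole_order_inf (p j) (q j) = 1"
    using Mge M1 unfolding po_def by force
  have "c 0 + c 1 + c 2 + c 3 + c 4 = 1" using sumc s5 N1' by simp
  from alg1[OF k0 k1 k2 k3 k4 this] P1 show ?thesis unfolding Peq Let_def by blast
qed

end
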